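(* Let $p\in(1,\infty)$ and let $X$ be a Banach space with the $p$-Banach-Saks property which does not contain (an isomorphic copy of) $\ell_1$. Then $X$ has the alternating Banach-Saks property. In particular, if $X$ is also reflexive, then $X$ has the Banach-Saks property.
   Context: A Banach space $X$ has the $p$-Banach-Saks property if for every semi-normalized (bounded and bounded away from $0$) weakly null sequence $(x_n)$ in $X$ there exist a subsequence $(x_{n_j})$ and $c>0$ such that $\|x_{n_{j_1}}+\dots+x_{n_{j_k}}\|\le ck^{1/p}$ for all $k\in\mathbb N$ and all $k\le j_1<\dots<j_k$. $X$ has the Banach-Saks property if every bounded sequence $(x_n)$ has a subsequence $(x_{n_j})$ with $(\frac1k\sum_{j=1}^kx_{n_j})_k$ norm convergent; $X$ has the alternating Banach-Saks property if every bounded sequence $(x_n)$ has a subsequence $(x_{n_j})$ and signs $(\varepsilon_j)\in\{-1,1\}^{\mathbb N}$ with $(\frac1k\sum_{j=1}^k\varepsilon_jx_{n_j})_k$ norm convergent. *)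

theory Defs
  imports "HOL-Analysis.Analysis"
begin

text \<open>Banach spaces are modelled as real Banach spaces, i.e. types of class banach.\<close>

definition weakly_null :: "(nat \<Rightarrow> 'a::real_normed_vector) \<Rightarrow> bool" where
  "weakly_null x \<longleftrightarrow> (\<forall>f :: 'a \<Rightarrow> real. bounded_linear f \<longrightarrow> (\<lambda>n. f (x n)) \<longlonglongrightarrow> 0)"

definition semi_normalized :: "(nat \<Rightarrow> 'a::real_normed_vector) \<Rightarrow> bool" where
  "semi_normalized x \<longleftrightarrow> (\<exists>a b. 0 < a \<and> (\<forall>n. a \<le> norm (x n) \<and> norm (x n) \<le> b))"

text \<open>p-Banach-Saks property: the subsequence is (x (r j)) indexed by j, and the
  finite index sets F = {j_1 < ... < j_k} satisfy k \<le> j_1.\<close>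
definition p_Banach_Saks :: "real \<Rightarrow> 'a::real_normed_vector itself \<Rightarrow> bool" where
  "p_Banach_Saks p _ \<longleftrightarrow>
     (\<forall>x :: nat \<Rightarrow> 'a. semi_normalized x \<and> weakly_null x \<longrightarrow>
        (\<exists>r c. strict_mono r \<and> c > 0 \<and>
           (\<forall>F. finite F \<and> F \<noteq> {} \<and> card F \<le> Min F \<longrightarrow>
              norm (\<Sum>j\<in>F. x (r j)) \<le> c * real (card F) powr (1 / p))))"

definition Banach_Saks :: "'a::real_normed_vector itself \<Rightarrow> bool" where
  "Banach_Saks _ \<longleftrightarrow>
     (\<forall>x :: nat \<Rightarrow> 'a. bounded (range x) \<longrightarrow>
        (\<exists>r. strict_mono r \<and>
           convergent (\<lambda>k. (1 / real (Suc k)) *\<^sub>R (\<Sum>j\<le>k. x (r j)))))"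

definition alternating_Banach_Saks :: "'a::real_normed_vector itself \<Rightarrow> bool" where
  "alternating_Banach_Saks _ \<longleftrightarrow>
     (\<forall>x :: nat \<Rightarrow> 'a. bounded (range x) \<longrightarrow>
        (\<exists>r \<epsilon>. strict_mono r \<and> (\<forall>j. \<epsilon> j \<in> {-1, 1::real}) \<and>
           convergent (\<lambda>k. (1 / real (Suc k)) *\<^sub>R (\<Sum>j\<le>k. \<epsilon> j *\<^sub>R x (r j)))))"

definition ell1 :: "(nat \<Rightarrow> real) set" where
  "ell1 = {a. summable (\<lambda>n. \<bar>a n\<bar>)}"

definition ell1_norm :: "(nat \<Rightarrow> real) \<Rightarrow> real" where
  "ell1_norm a = (\<Sum>n. \<bar>a n\<bar>)"

definition contains_ell1 :: "'a::real_normed_vector itself \<Rightarrow> bool" where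
  "contains_ell1 _ \<longleftrightarrow>
     (\<exists>(T :: (nat \<Rightarrow> real) \<Rightarrow> 'a) c C. 0 < c \<and>
        (\<forall>a\<in>ell1. \<forall>b\<in>ell1. T (\<lambda>n. a n + b n) = T a + T b) \<and>
        (\<forall>a\<in>ell1. \<forall>t::real. T (\<lambda>n. t * a n) = t *\<^sub>R T a) \<and>
        (\<forall>a\<in>ell1. c * ell1_norm a \<le> norm (T a) \<and> norm (T a) \<le> C * ell1_norm a))"

definition reflexive_space :: "'a::real_normed_vector itself \<Rightarrow> bool" where
  "reflexive_space _ \<longleftrightarrow>
     (\<forall>\<phi> :: ('a \<Rightarrow>\<^sub>L real) \<Rightarrow>\<^sub>L real. \<exists>x::'a. \<forall>f. blinfun_apply \<phi> f = blinfun_apply f x)"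

end

theory Submission
  imports Defs
begin


definition osc :: "(nat \<Rightarrow> 's set) \<Rightarrow> (nat \<Rightarrow> 's set) \<Rightarrow> 's \<Rightarrow> nat set \<Rightarrow> bool" where
  "osc A B t L \<longleftrightarrow> infinite {n\<in>L. t \<in> A n} \<and> infinite {n\<in>L. t \<in> B n}"

definition NC :: "(nat \<Rightarrow> 's set) \<Rightarrow> (nat \<Rightarrow> 's set) \<Rightarrow> 's set \<Rightarrow> nat set \<Rightarrow> bool" where
  "NC A B C M \<longleftrightarrow> (\<forall>L\<subseteq>M. infinite L \<longrightarrow> (\<exists>t\<in>C. osc A B t L))"

lemma osc_mono: "osc A B t L \<Longrightarrow> L \<subseteq> L' \<Longrightarrow> osc A B t L'"
proof -
  assume o: "osc A B t L" and s: "L \<subseteq> L'"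
  have "{n\<in>L. t \<in> A n} \<subseteq> {n\<in>L'. t \<in> A n}" "{n\<in>L. t \<in> B n} \<subseteq> {n\<in>L'. t \<in> B n}" using s by auto
  then show ?thesis using o unfolding osc_def using infinite_super by blast
qed

lemma osc_cofin: "osc A B t L \<Longrightarrow> finite F \<Longrightarrow> osc A B t (L - F)"
proof -
  assume o: "osc A B t L" and f: "finite F"
  have "{n\<in>L - F. t \<in> A n} = {n\<in>L. t \<in> A n} - F" "{n\<in>L - F. t \<in> B n} = {n\<in>L. t \<in> B n} - F" by auto
  then show ?thesis using o f unfolding osc_def by (simp add: Diff_infinite_finite)
qed

lemma NC_nonempty: "NC A B C M \<Longrightarrow> infinite M \<Longrightarrow> C \<noteq> {}"
  unfolding NC_def by blast

lemma key_lemma: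
  assumes fin: "finite \<C>" and infM: "infinite M" and nc: "\<forall>C\<in>\<C>. NC A B C M"
  shows "\<exists>n\<in>M. \<exists>L\<subseteq>M. infinite L \<and> (\<forall>l\<in>L. n < l) \<and>
           (\<forall>C\<in>\<C>. NC A B (C \<inter> A n) L \<and> NC A B (C \<inter> B n) L)"
proof (rule ccontr)
  assume H0: "\<not> ?thesis"
  define E where "E = (\<lambda>(n::nat) (e::bool). if e then A n else B n)"
  have H: "\<exists>C e L'. C \<in> \<C> \<and> L' \<subseteq> L \<and> infinite L' \<and> (\<forall>t\<in>C \<inter> E n e. \<not> osc A B t L')"
    if "n \<in> M" "L \<subseteq> M" "infinite L" "\<forall>l\<in>L. n < l" for n L
  proof -
    from H0 that obtain C where C: "C \<in> \<C>" "\<not> NC A B (C \<inter> A n) L \<or> \<not> NC A B (C \<inter> B n) L"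
      by blast
    from C(2) show ?thesis
    proof
      assume "\<not> NC A B (C \<inter> A n) L"
      then obtain L' where "L' \<subseteq> L" "infinite L'" "\<forall>t\<in>C \<inter> A n. \<not> osc A B t L'"
        unfolding NC_def by blast
      then show ?thesis using C(1) by (intro exI[of _ C] exI[of _ True] exI[of _ L']) (auto simp: E_def)
    next
      assume "\<not> NC A B (C \<inter> B n) L"
      then obtain L' where "L' \<subseteq> L" "infinite L'" "\<forall>t\<in>C \<inter> B n. \<not> osc A B t L'"
        unfolding NC_def by blast
      then show ?thesis using C(1) by (intro exI[of _ C] exI[of _ False] exI[of _ L']) (auto simp: E_def)
    qed
  qed
  have step: "\<exists>n C e L'. n \<in> L \<and> C \<in> \<C> \<and> L' \<subseteq> L \<and> infinite L' \<and> (\<forall>l\<in>L'. n < l)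
       \<and> (\<forall>t\<in>C \<inter> E n e. \<not> osc A B t L')"
    if "L \<subseteq> M" "infinite L" for L
  proof -
    obtain n where n: "n \<in> L" using \<open>infinite L\<close> by (metis finite.emptyI ex_in_conv)
    define L0 where "L0 = {l\<in>L. n < l}"
    have "L0 = L - {..n}" unfolding L0_def by auto
    then have "infinite L0" using \<open>infinite L\<close> by (simp add: Diff_infinite_finite)
    moreover have "L0 \<subseteq> M" "\<forall>l\<in>L0. n < l" using that unfolding L0_def by auto
    moreover have "n \<in> M" using n \<open>L \<subseteq> M\<close> by blast
    ultimately obtain C e L' where "C \<in> \<C>" "L' \<subseteq> L0" "infinite L'" "\<forall>t\<in>C \<inter> E n e. \<not> osc A B t L'"
      using H[of n L0] by blast
    then show ?thesis using n unfolding L0_def by (intro exI[of _ n] exI[of _ C] exI[of _ e] exI[of _ L']) auto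
  qed
  define P where "P = (\<lambda>(k::nat) (s :: nat \<times> 'a set \<times> bool \<times> nat set).
      case s of (n, C, e, L) \<Rightarrow> n \<in> M \<and> C \<in> \<C> \<and> L \<subseteq> M \<and> infinite L \<and> (\<forall>l\<in>L. n < l) \<and> (\<forall>t\<in>C \<inter> E n e. \<not> osc A B t L))"
  define Q where "Q = (\<lambda>(k::nat) (s :: nat \<times> 'a set \<times> bool \<times> nat set) (s' :: nat \<times> 'a set \<times> bool \<times> nat set).
      case s of (n, C, e, L) \<Rightarrow> case s' of (n', C', e', L') \<Rightarrow> n' \<in> L \<and> L' \<subseteq> L)"
  have "\<exists>f. \<forall>k. P k (f k) \<and> Q k (f k) (f (Suc k))"
  proof (rule dependent_nat_choice)
    obtain n C e L' where "n \<in> M" "C \<in> \<C>" "L' \<subseteq> M" "infinite L'" "\<forall>l\<in>L'. n < l"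
       "\<forall>t\<in>C \<inter> E n e. \<not> osc A B t L'" using step[of M] infM by blast
    then have "P 0 (n, C, e, L')" unfolding P_def by simp
    then show "\<exists>x. P 0 x" by blast
  next
    fix s k assume "P k s"
    then obtain n C e L where s: "s = (n, C, e, L)" and "L \<subseteq> M" "infinite L" unfolding P_def by auto
    then obtain n' C' e' L' where "n' \<in> L" "C' \<in> \<C>" "L' \<subseteq> L" "infinite L'" "\<forall>l\<in>L'. n' < l"
       "\<forall>t\<in>C' \<inter> E n' e'. \<not> osc A B t L'" using step[of L] by blast
    then have "P (Suc k) (n', C', e', L') \<and> Q k s (n', C', e', L')" using \<open>L \<subseteq> M\<close> unfolding P_def Q_def s
      by auto
    then show "\<exists>y. P (Suc k) y \<and> Q k s y" by blast
  qed
  then obtain f where f: "\<And>k. P k (f k)" "\<And>k. Q k (f k) (f (Suc k))" by blast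
  define nn where "nn k = fst (f k)" for k
  define CC where "CC k = fst (snd (f k))" for k
  define ee where "ee k = fst (snd (snd (f k)))" for k
  define LL where "LL k = snd (snd (snd (f k)))" for k
  have fk: "f k = (nn k, CC k, ee k, LL k)" for k unfolding nn_def CC_def ee_def LL_def by simp
  have P1: "nn k \<in> M" "CC k \<in> \<C>" "LL k \<subseteq> M" "infinite (LL k)" "\<forall>l\<in>LL k. nn k < l"
     "\<forall>t\<in>CC k \<inter> E (nn k) (ee k). \<not> osc A B t (LL k)" for k
  proof -
    have "P k (nn k, CC k, ee k, LL k)" using f(1)[of k] unfolding fk[symmetric] .
    then show "nn k \<in> M" "CC k \<in> \<C>" "LL k \<subseteq> M" "infinite (LL k)" "\<forall>l\<in>LL k. nn k < l"
     "\<forall>t\<in>CC k \<inter> E (nn k) (ee k). \<not> osc A B t (LL k)" unfolding P_def by simp_all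
  qed
  have Q1: "nn (Suc k) \<in> LL k" "LL (Suc k) \<subseteq> LL k" for k
  proof -
    have "Q k (nn k, CC k, ee k, LL k) (nn (Suc k), CC (Suc k), ee (Suc k), LL (Suc k))"
      using f(2)[of k] unfolding fk[symmetric] .
    then show "nn (Suc k) \<in> LL k" "LL (Suc k) \<subseteq> LL k" unfolding Q_def by simp_all
  qed
  have LLdec: "LL j \<subseteq> LL k" if "k \<le> j" for j k
    using that
  proof (induction j rule: dec_induct)
    case base then show ?case by simp
  next
    case (step j) then show ?case using Q1(2)[of j] by blast
  qed
  have nnin0: "nn (Suc j) \<in> LL k" if "k \<le> j" for j k
    using Q1(1)[of j] LLdec[OF that] by (rule subsetD[rotated])
  have nnin: "nn j \<in> LL k" if "k < j" for j k
  proof -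
    have "j = Suc (j - 1)" using that by simp
    moreover have "k \<le> j - 1" using that by simp
    ultimately show ?thesis using nnin0[of k "j - 1"] by simp
  qed
  have smono: "strict_mono nn"
    unfolding strict_mono_Suc_iff
  proof
    fix k show "nn k < nn (Suc k)" using P1(5)[of k] Q1(1)[of k] by blast
  qed
  define \<tau> where "\<tau> k = (CC k, ee k)" for k
  have "\<tau> ` UNIV \<subseteq> \<C> \<times> (UNIV :: bool set)" using P1(2) unfolding \<tau>_def by auto
  moreover have "finite (\<C> \<times> (UNIV :: bool set))" using fin by simp
  ultimately have "finite (\<tau> ` UNIV)" by (rule finite_subset)
  then obtain y where "infinite (\<tau> -` {y})" using inf_img_fin_domE[OF _ infinite_UNIV_nat] by blast
  then obtain C0 e0 where K: "infinite {k. CC k = C0 \<and> ee k = e0}"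
    unfolding \<tau>_def by (cases y) (auto simp: vimage_def)
  define K where "K = {k. CC k = C0 \<and> ee k = e0}"
  have "K \<noteq> {}" using K unfolding K_def by force
  then obtain k0 where "k0 \<in> K" by blast
  then have C0: "C0 \<in> \<C>" using P1(2) unfolding K_def by auto
  define D where "D = nn ` K"
  have "inj_on nn K" using strict_mono_imp_inj_on[OF smono] inj_on_subset by blast
  then have infD: "infinite D" unfolding D_def using K K_def finite_imageD by blast
  have "D \<subseteq> M" unfolding D_def using P1(1) by blast
  with nc C0 infD obtain t where t: "t \<in> C0" "osc A B t D" unfolding NC_def by blast
  have "infinite {m \<in> D. t \<in> E m e0}" using t(2) unfolding osc_def E_def by (cases e0) auto
  then have "{m \<in> D. t \<in> E m e0} \<noteq> {}" by (metis finite.emptyI)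
  then obtain m where m: "m \<in> D" "t \<in> E m e0" by blast
  then obtain k where k: "k \<in> K" "m = nn k" unfolding D_def by blast
  have "D - nn ` {..k} \<subseteq> LL k"
  proof
    fix z assume "z \<in> D - nn ` {..k}"
    then obtain j where "z = nn j" "j \<notin> {..k}" unfolding D_def by blast
    then show "z \<in> LL k" using nnin[of k j] by simp
  qed
  moreover have "osc A B t (D - nn ` {..k})" using t(2) by (intro osc_cofin) auto
  ultimately have "osc A B t (LL k)" by (rule osc_mono[rotated])
  moreover have "t \<in> CC k \<inter> E (nn k) (ee k)" using k m t(1) unfolding K_def by auto
  ultimately show False using P1(6)[of k] by blast
qed

definition pat :: "(nat \<Rightarrow> 's set) \<Rightarrow> (nat \<Rightarrow> 's set) \<Rightarrow> nat list \<Rightarrow> bool list \<Rightarrow> 's set" where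
  "pat A B ns bs = {t. \<forall>i<length ns. (bs!i \<longrightarrow> t \<in> A (ns!i)) \<and> (\<not> bs!i \<longrightarrow> t \<in> B (ns!i))}"

definition fam :: "(nat \<Rightarrow> 's set) \<Rightarrow> (nat \<Rightarrow> 's set) \<Rightarrow> nat list \<Rightarrow> 's set set" where
  "fam A B ns = pat A B ns ` {bs. length bs = length ns}"

lemma fam_finite: "finite (fam A B ns)"
proof -
  have "{bs::bool list. length bs = length ns} = {xs. set xs \<subseteq> UNIV \<and> length xs = length ns}" by auto
  then have "finite {bs::bool list. length bs = length ns}" using finite_lists_length_eq[of "UNIV::bool set"] by simp
  then show ?thesis unfolding fam_def by simp
qed

lemma pat_snoc: "length bs = length ns \<Longrightarrow>
   pat A B (ns@[n]) (bs@[b]) = pat A B ns bs \<inter> (if b then A n else B n)"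
  unfolding pat_def by (auto simp: nth_append less_Suc_eq)

lemma fam_snoc: "C \<in> fam A B (ns@[n]) \<Longrightarrow> \<exists>C'\<in>fam A B ns. C = C' \<inter> A n \<or> C = C' \<inter> B n"
proof -
  assume "C \<in> fam A B (ns@[n])"
  then obtain bs' where bs': "length bs' = Suc (length ns)" "C = pat A B (ns@[n]) bs'" unfolding fam_def by auto
  then have "bs' \<noteq> []" by auto
  then have e: "bs' = butlast bs' @ [last bs']" by simp
  have l: "length (butlast bs') = length ns" using bs'(1) by simp
  have "C = pat A B ns (butlast bs') \<inter> (if last bs' then A n else B n)"
    using bs'(2) pat_snoc[OF l, of A B n "last bs'"] e by metis
  moreover have "pat A B ns (butlast bs') \<in> fam A B ns" using l unfolding fam_def by auto
  ultimately show ?thesis by (cases "last bs'") auto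
qed

lemma boolean_indep:
  assumes infM0: "infinite M0" and nc0: "NC A B UNIV M0"
  shows "\<exists>r :: nat \<Rightarrow> nat. strict_mono r \<and> range r \<subseteq> M0 \<and> (\<forall>P Q. finite P \<longrightarrow> finite Q \<longrightarrow> P \<inter> Q = {} \<longrightarrow>
            (\<exists>t. (\<forall>i\<in>P. t \<in> A (r i)) \<and> (\<forall>i\<in>Q. t \<in> B (r i))))"
proof -
  define P where "P = (\<lambda>(k::nat) (s :: nat list \<times> nat set). case s of (ns, M) \<Rightarrow>
      length ns = k \<and> infinite M \<and> M \<subseteq> M0 \<and> (\<forall>C\<in>fam A B ns. NC A B C M) \<and> (\<forall>m\<in>M. \<forall>i<k. ns!i < m))"
  define Q where "Q = (\<lambda>(k::nat) (s :: nat list \<times> nat set) (s' :: nat list \<times> nat set). case s of (ns, M) \<Rightarrow>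
      case s' of (ns', M') \<Rightarrow> (\<exists>n\<in>M. ns' = ns@[n]) \<and> M' \<subseteq> M)"
  have "\<exists>f. \<forall>k. P k (f k) \<and> Q k (f k) (f (Suc k))"
  proof (rule dependent_nat_choice)
    have "fam A B [] = {UNIV}" unfolding fam_def pat_def by auto
    then have "P 0 ([], M0)" using infM0 nc0 unfolding P_def by simp
    then show "\<exists>x. P 0 x" by blast
  next
    fix s k assume "P k s"
    then obtain ns M where s: "s = (ns, M)" and H: "length ns = k" "infinite M" "M \<subseteq> M0"
      "\<forall>C\<in>fam A B ns. NC A B C M" "\<forall>m\<in>M. \<forall>i<k. ns!i < m" unfolding P_def by auto
    obtain n L where nL: "n \<in> M" "L \<subseteq> M" "infinite L" "\<forall>l\<in>L. n < l"
      "\<forall>C\<in>fam A B ns. NC A B (C \<inter> A n) L \<and> NC A B (C \<inter> B n) L"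
      using key_lemma[OF fam_finite H(2) H(4)] by blast
    have "\<forall>C\<in>fam A B (ns@[n]). NC A B C L"
    proof
      fix C assume "C \<in> fam A B (ns@[n])"
      then obtain C' where "C'\<in>fam A B ns" "C = C' \<inter> A n \<or> C = C' \<inter> B n" using fam_snoc by blast
      then show "NC A B C L" using nL(5) by blast
    qed
    moreover have "\<forall>m\<in>L. \<forall>i<Suc k. (ns@[n])!i < m"
    proof (intro ballI allI impI)
      fix m i assume "m \<in> L" "i < Suc k"
      then show "(ns@[n])!i < m" using H(1,5) nL(2,4) by (cases "i < k") (auto simp: nth_append)
    qed
    ultimately have "P (Suc k) (ns@[n], L)" using H nL unfolding P_def by auto
    moreover have "Q k s (ns@[n], L)" using nL unfolding Q_def s by auto
    ultimately show "\<exists>y. P (Suc k) y \<and> Q k s y" by blast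
  qed
  then obtain f where f: "\<And>k. P k (f k)" "\<And>k. Q k (f k) (f (Suc k))" by blast
  define ns where "ns k = fst (f k)" for k
  define MM where "MM k = snd (f k)" for k
  have fk: "f k = (ns k, MM k)" for k unfolding ns_def MM_def by simp
  have P1: "length (ns k) = k" "infinite (MM k)" "MM k \<subseteq> M0" "\<forall>C\<in>fam A B (ns k). NC A B C (MM k)"
     "\<forall>m\<in>MM k. \<forall>i<k. ns k!i < m" for k
  proof -
    have "P k (ns k, MM k)" using f(1)[of k] unfolding fk[symmetric] .
    then show "length (ns k) = k" "infinite (MM k)" "MM k \<subseteq> M0" "\<forall>C\<in>fam A B (ns k). NC A B C (MM k)"
     "\<forall>m\<in>MM k. \<forall>i<k. ns k!i < m" unfolding P_def by simp_all
  qed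
  have Q1: "\<exists>n\<in>MM k. ns (Suc k) = ns k @ [n]" "MM (Suc k) \<subseteq> MM k" for k
  proof -
    have "Q k (ns k, MM k) (ns (Suc k), MM (Suc k))" using f(2)[of k] unfolding fk[symmetric] .
    then show "\<exists>n\<in>MM k. ns (Suc k) = ns k @ [n]" "MM (Suc k) \<subseteq> MM k" unfolding Q_def by simp_all
  qed
  define r where "r k = ns (Suc k) ! k" for k
  have rin: "r k \<in> MM k" for k
  proof -
    obtain n where "n \<in> MM k" "ns (Suc k) = ns k @ [n]" using Q1(1)[of k] by blast
    then show ?thesis unfolding r_def using P1(1)[of k] by (simp add: nth_append)
  qed
  have prefix: "\<exists>zs. ns j = ns k @ zs" if "k \<le> j" for j k
    using that
  proof (induction j rule: dec_induct)
    case base then show ?case by simp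
  next
    case (step j)
    then obtain zs where "ns j = ns k @ zs" by blast
    moreover obtain n where "ns (Suc j) = ns j @ [n]" using Q1(1)[of j] by blast
    ultimately show ?case by (intro exI[of _ "zs @ [n]"]) simp
  qed
  have nsr: "ns k ! i = r i" if ik: "i < k" for i k
  proof -
    obtain zs where "ns k = ns (Suc i) @ zs" using prefix[of "Suc i" k] ik by auto
    then show ?thesis unfolding r_def using P1(1)[of "Suc i"] by (simp add: nth_append)
  qed
  have smono: "strict_mono r"
    unfolding strict_mono_Suc_iff
  proof
    fix k
    have "ns (Suc k) ! k < r (Suc k)" using P1(5)[of "Suc k"] rin[of "Suc k"] lessI by blast
    then show "r k < r (Suc k)" unfolding r_def .
  qed
  have "r k \<in> M0" for k using rin[of k] P1(3)[of k] by blast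
  then have "range r \<subseteq> M0" by auto
  moreover have BI: "\<exists>t. (\<forall>i\<in>PP. t \<in> A (r i)) \<and> (\<forall>i\<in>QQ. t \<in> B (r i))"
    if fPQ: "finite PP" "finite QQ" "PP \<inter> QQ = {}" for PP QQ
  proof -
    obtain k where k: "PP \<union> QQ \<subseteq> {..<k}" using finite_nat_bounded[of "PP \<union> QQ"] fPQ by blast
    define bs where "bs = map (\<lambda>i. i \<in> PP) [0..<k]"
    have lbs: "length bs = length (ns k)" unfolding bs_def using P1(1) by simp
    then have "pat A B (ns k) bs \<in> fam A B (ns k)" unfolding fam_def by auto
    then have "pat A B (ns k) bs \<noteq> {}" using P1(4)[of k] P1(2)[of k] NC_nonempty by blast
    then obtain t where t: "t \<in> pat A B (ns k) bs" by blast
    have "t \<in> A (r i)" if "i \<in> PP" for i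
    proof -
      have ik: "i < k" using k that by auto
      have b: "bs ! i" unfolding bs_def using ik that by simp
      have "i < length (ns k)" using P1(1)[of k] ik by simp
      then have "bs!i \<longrightarrow> t \<in> A (ns k ! i)" using t unfolding pat_def by blast
      then show ?thesis using nsr[OF ik] b by simp
    qed
    moreover have "t \<in> B (r i)" if "i \<in> QQ" for i
    proof -
      have ik: "i < k" using k that by auto
      moreover have "i \<notin> PP" using that \<open>PP \<inter> QQ = {}\<close> by auto
      ultimately have b: "\<not> bs ! i" unfolding bs_def by simp
      have "i < length (ns k)" using P1(1)[of k] ik by simp
      then have "\<not> bs!i \<longrightarrow> t \<in> B (ns k ! i)" using t unfolding pat_def by blast
      then show ?thesis using nsr[OF ik] b by simp
    qed
    ultimately show ?thesis by blast
  qed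
  ultimately have "range r \<subseteq> M0" by blast
  have "strict_mono r \<and> range r \<subseteq> M0 \<and> (\<forall>PP QQ. finite PP \<longrightarrow> finite QQ \<longrightarrow> PP \<inter> QQ = {} \<longrightarrow>
            (\<exists>t. (\<forall>i\<in>PP. t \<in> A (r i)) \<and> (\<forall>i\<in>QQ. t \<in> B (r i))))"
    using smono \<open>range r \<subseteq> M0\<close> BI by blast
  then show ?thesis by blast
qed



lemma ev_subseq_infinite:
  assumes "strict_mono r" "eventually (\<lambda>n. P (r n)) sequentially"
  shows "infinite {n. P n}"
proof -
  obtain N where N: "\<forall>n\<ge>N. P (r n)" using assms(2) unfolding eventually_sequentially by blast
  have "r ` {N..} \<subseteq> {n. P n}" using N by auto
  moreover have "infinite (r ` {N..})"
    using strict_mono_imp_inj_on[OF assms(1)] finite_imageD inj_on_subset infinite_Ici by blast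
  ultimately show ?thesis using infinite_super by blast
qed

lemma no_osc_convergent:
  fixes u :: "nat \<Rightarrow> real"
  assumes K: "\<And>n. \<bar>u n\<bar> \<le> K"
    and no: "\<And>a b. a \<in> \<rat> \<Longrightarrow> b \<in> \<rat> \<Longrightarrow> a < b \<Longrightarrow> infinite {n. u n < a} \<Longrightarrow> infinite {n. b < u n} \<Longrightarrow> False"
  shows "convergent u"
proof -
  have "bounded (range u)" unfolding bounded_iff using K by auto
  then obtain l r where r: "strict_mono r" "(u \<circ> r) \<longlonglongrightarrow> l"
    using bounded_imp_convergent_subsequence by blast
  have "u \<longlonglongrightarrow> l"
  proof (rule ccontr)
    assume "\<not> u \<longlonglongrightarrow> l"
    then have "\<not> (\<forall>e>0. \<exists>N. \<forall>n\<ge>N. \<bar>u n - l\<bar> < e)" unfolding LIMSEQ_iff by simp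
    then obtain e where e: "e > 0" "\<not> (\<exists>N. \<forall>n\<ge>N. \<bar>u n - l\<bar> < e)" by blast
    from e(2) have "\<forall>m. \<exists>n\<ge>m. e \<le> \<bar>u n - l\<bar>" by (simp add: not_less)
    then have "infinite {n. e \<le> \<bar>u n - l\<bar>}"
      by (simp add: infinite_nat_iff_unbounded_le)
    moreover have "{n. e \<le> \<bar>u n - l\<bar>} = {n. l + e \<le> u n} \<union> {n. u n \<le> l - e}" by auto
    ultimately have "infinite {n. l + e \<le> u n} \<or> infinite {n. u n \<le> l - e}" by simp
    then show False
    proof
      assume inf: "infinite {n. l + e \<le> u n}"
      obtain a where a: "a \<in> \<rat>" "l < a" "a < l + e/2" using Rats_dense_in_real[of l "l + e/2"] e by auto
      obtain b where b: "b \<in> \<rat>" "l + e/2 < b" "b < l + e" using Rats_dense_in_real[of "l + e/2" "l + e"] e by auto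
      have "eventually (\<lambda>n. (u \<circ> r) n < a) sequentially" using order_tendstoD(2)[OF r(2) a(2)] .
      then have "infinite {n. u n < a}" using ev_subseq_infinite[OF r(1)] by simp
      moreover have "infinite {n. b < u n}"
        using inf by (rule infinite_super[rotated]) (use b in auto)
      ultimately show False using no[OF a(1) b(1)] a b by simp
    next
      assume inf: "infinite {n. u n \<le> l - e}"
      obtain a where a: "a \<in> \<rat>" "l - e < a" "a < l - e/2" using Rats_dense_in_real[of "l - e" "l - e/2"] e by auto
      obtain b where b: "b \<in> \<rat>" "l - e/2 < b" "b < l" using Rats_dense_in_real[of "l - e/2" l] e by auto
      have "eventually (\<lambda>n. b < (u \<circ> r) n) sequentially" using order_tendstoD(1)[OF r(2) b(3)] .
      then have "infinite {n. b < u n}" using ev_subseq_infinite[OF r(1)] by simp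
      moreover have "infinite {n. u n < a}"
        using inf by (rule infinite_super[rotated]) (use a in auto)
      ultimately show False using no[OF a(1) b(1)] a b by simp
    qed
  qed
  then show ?thesis unfolding convergent_def by blast
qed

definition dualball :: "('a::real_normed_vector \<Rightarrow> real) set" where
  "dualball = {t. bounded_linear t \<and> (\<forall>y. \<bar>t y\<bar> \<le> norm y)}"

lemma zero_dualball: "(\<lambda>_. 0) \<in> dualball"
  unfolding dualball_def by (simp add: bounded_linear_zero)

lemma rosenthal_dich:
  fixes x :: "nat \<Rightarrow> 'a::real_normed_vector"
  assumes K: "\<And>n. norm (x n) \<le> K"
  shows "(\<exists>r. strict_mono r \<and> (\<forall>t\<in>dualball. convergent (\<lambda>n. t (x (r n))))) \<or>
    (\<exists>(r::nat \<Rightarrow> nat) a b. a < b \<and> strict_mono r \<and> (\<forall>P Q. finite P \<longrightarrow> finite Q \<longrightarrow> P \<inter> Q = {} \<longrightarrow>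
        (\<exists>t\<in>dualball. (\<forall>i\<in>P. t (x (r i)) < a) \<and> (\<forall>i\<in>Q. b < t (x (r i))))))"
proof -
  define Aa where "Aa a n = {t\<in>dualball. t (x n) < a}" for a n
  define Bb where "Bb b n = {t\<in>dualball. b < t (x n)}" for b n
  show ?thesis
  proof (cases "\<exists>M a b. infinite M \<and> a < b \<and> NC (Aa a) (Bb b) UNIV M")
    case True
    then obtain M a b where Mab: "infinite M" "a < b" "NC (Aa a) (Bb b) UNIV M" by blast
    obtain r :: "nat \<Rightarrow> nat" where r: "strict_mono r" "\<forall>P Q. finite P \<longrightarrow> finite Q \<longrightarrow> P \<inter> Q = {} \<longrightarrow>
            (\<exists>t. (\<forall>i\<in>P. t \<in> Aa a (r i)) \<and> (\<forall>i\<in>Q. t \<in> Bb b (r i)))"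
      using boolean_indep[OF Mab(1) Mab(3)] by blast
    have BI: "\<exists>t\<in>dualball. (\<forall>i\<in>P. t (x (r i)) < a) \<and> (\<forall>i\<in>Q. b < t (x (r i)))"
      if PQ: "finite P" "finite Q" "P \<inter> Q = {}" for P Q
    proof (cases "P = {} \<and> Q = {}")
      case True then show ?thesis using zero_dualball by (intro bexI[of _ "\<lambda>_. 0"]) auto
    next
      case False
      obtain t where t: "\<forall>i\<in>P. t \<in> Aa a (r i)" "\<forall>i\<in>Q. t \<in> Bb b (r i)" using r(2)[rule_format, OF PQ] by blast
      have "t \<in> dualball" using False t unfolding Aa_def Bb_def by auto
      then show ?thesis using t unfolding Aa_def Bb_def by auto
    qed
    have "a < b \<and> strict_mono r \<and> (\<forall>P Q. finite P \<longrightarrow> finite Q \<longrightarrow> P \<inter> Q = {} \<longrightarrow>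
        (\<exists>t\<in>dualball. (\<forall>i\<in>P. t (x (r i)) < a) \<and> (\<forall>i\<in>Q. b < t (x (r i)))))"
    proof (intro conjI allI impI)
      show "a < b" by (rule Mab(2))
      show "strict_mono r" by (rule r(1))
      fix P Q :: "nat set" assume "finite P" "finite Q" "P \<inter> Q = {}"
      then show "\<exists>t\<in>dualball. (\<forall>i\<in>P. t (x (r i)) < a) \<and> (\<forall>i\<in>Q. b < t (x (r i)))" by (rule BI)
    qed
    then have "\<exists>(r::nat \<Rightarrow> nat) a b. a < b \<and> strict_mono r \<and> (\<forall>P Q. finite P \<longrightarrow> finite Q \<longrightarrow> P \<inter> Q = {} \<longrightarrow>
        (\<exists>t\<in>dualball. (\<forall>i\<in>P. t (x (r i)) < a) \<and> (\<forall>i\<in>Q. b < t (x (r i)))))"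
      by (intro exI[of _ r] exI[of _ a] exI[of _ b])
    then show ?thesis by (rule disjI2)
  next
    case False
    define q :: "nat \<Rightarrow> rat \<times> rat" where "q k = from_nat k" for k
    define a where "a k = (of_rat (fst (q k)) :: real)" for k
    define b where "b k = (of_rat (snd (q k)) :: real)" for k
    define good where "good k L \<longleftrightarrow> (a k < b k \<longrightarrow> (\<forall>t. \<not> osc (Aa (a k)) (Bb (b k)) t L))" for k L
    have shrink: "\<exists>L\<subseteq>M. infinite L \<and> good k L" if "infinite M" for M k
    proof (cases "a k < b k")
      case True
      then have "\<not> NC (Aa (a k)) (Bb (b k)) UNIV M" using False that by blast
      then show ?thesis unfolding NC_def good_def by blast
    next
      case False then show ?thesis using that unfolding good_def by blast
    qed
    define P where "P = (\<lambda>k (s :: nat \<times> nat set). case s of (n, L) \<Rightarrow>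
        infinite L \<and> (\<forall>l\<in>L. n < l) \<and> good k L)"
    define Q where "Q = (\<lambda>(k::nat) (s :: nat \<times> nat set) (s' :: nat \<times> nat set). case s of (n, L) \<Rightarrow>
        case s' of (n', L') \<Rightarrow> n' \<in> L \<and> L' \<subseteq> L)"
    have "\<exists>f. \<forall>k. P k (f k) \<and> Q k (f k) (f (Suc k))"
    proof (rule dependent_nat_choice)
      have "{l::nat. 0 < l} = UNIV - {0}" by auto
      then have "infinite {l::nat. 0 < l}" by (simp add: Diff_infinite_finite)
      then obtain L where "L \<subseteq> {l. 0 < l}" "infinite L" "good 0 L" using shrink by blast
      then have "P 0 (0, L)" unfolding P_def by auto
      then show "\<exists>x. P 0 x" by blast
    next
      fix s k assume "P k s"
      then obtain n L where s: "s = (n, L)" and "infinite L" unfolding P_def by auto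
      then obtain n' where n': "n' \<in> L" by (metis ex_in_conv finite.emptyI)
      have "{l\<in>L. n' < l} = L - {..n'}" by auto
      then have "infinite {l\<in>L. n' < l}" using \<open>infinite L\<close> by (simp add: Diff_infinite_finite)
      then obtain L' where L': "L' \<subseteq> {l\<in>L. n' < l}" "infinite L'" "good (Suc k) L'" using shrink by blast
      then have "P (Suc k) (n', L') \<and> Q k s (n', L')" using n' unfolding P_def Q_def s by auto
      then show "\<exists>y. P (Suc k) y \<and> Q k s y" by blast
    qed
    then obtain f where f: "\<And>k. P k (f k)" "\<And>k. Q k (f k) (f (Suc k))" by blast
    define nn where "nn k = fst (f k)" for k
    define LL where "LL k = snd (f k)" for k
    have fk: "f k = (nn k, LL k)" for k unfolding nn_def LL_def by simp
    have P1: "infinite (LL k)" "\<forall>l\<in>LL k. nn k < l" "good k (LL k)" for k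
    proof -
      have "P k (nn k, LL k)" using f(1)[of k] unfolding fk[symmetric] .
      then show "infinite (LL k)" "\<forall>l\<in>LL k. nn k < l" "good k (LL k)" unfolding P_def by simp_all
    qed
    have Q1: "nn (Suc k) \<in> LL k" "LL (Suc k) \<subseteq> LL k" for k
    proof -
      have "Q k (nn k, LL k) (nn (Suc k), LL (Suc k))" using f(2)[of k] unfolding fk[symmetric] .
      then show "nn (Suc k) \<in> LL k" "LL (Suc k) \<subseteq> LL k" unfolding Q_def by simp_all
    qed
    have LLdec: "LL j \<subseteq> LL k" if "k \<le> j" for j k
      using that
    proof (induction j rule: dec_induct)
      case base then show ?case by simp
    next
      case (step j) then show ?case using Q1(2)[of j] by blast
    qed
    have nnin0: "nn (Suc j) \<in> LL k" if "k \<le> j" for j k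
      using Q1(1)[of j] LLdec[OF that] by (rule subsetD[rotated])
    have nnin: "nn j \<in> LL k" if "k < j" for j k
    proof -
      have "j = Suc (j - 1)" using that by simp
      moreover have "k \<le> j - 1" using that by simp
      ultimately show ?thesis using nnin0[of k "j - 1"] by simp
    qed
    have smono: "strict_mono nn"
      unfolding strict_mono_Suc_iff
    proof
      fix k show "nn k < nn (Suc k)" using P1(2)[of k] Q1(1)[of k] by blast
    qed
    have "convergent (\<lambda>n. t (x (nn n)))" if t: "t \<in> dualball" for t
    proof (rule no_osc_convergent)
      fix n
      have "\<bar>t (x (nn n))\<bar> \<le> norm (x (nn n))" using t unfolding dualball_def by blast
      then show "\<bar>t (x (nn n))\<bar> \<le> K" using K[of "nn n"] by linarith
    next
      fix a0 b0 :: real assume ab: "a0 \<in> \<rat>" "b0 \<in> \<rat>" "a0 < b0"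
        and ia: "infinite {n. t (x (nn n)) < a0}" and ib: "infinite {n. b0 < t (x (nn n))}"
      from ab(1) obtain \<alpha> where \<alpha>: "a0 = of_rat \<alpha>" by (cases rule: Rats_cases) 
      from ab(2) obtain \<beta> where \<beta>: "b0 = of_rat \<beta>" by (cases rule: Rats_cases) 
      define k where "k = to_nat (\<alpha>, \<beta>)"
      have ak: "a k = a0" "b k = b0" unfolding a_def b_def q_def k_def \<alpha> \<beta> by simp_all
      define T where "T = nn ` {k<..}"
      have TL: "T \<subseteq> LL k"
      proof
        fix z assume "z \<in> T"
        then obtain j where "z = nn j" "k < j" unfolding T_def by auto
        then show "z \<in> LL k" using nnin[of k j] by simp
      qed
      have inj: "inj nn" using strict_mono_imp_inj_on[OF smono] .
      have "nn ` ({n. t (x (nn n)) < a0} - {..k}) \<subseteq> {m\<in>T. t \<in> Aa a0 m}"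
        unfolding T_def Aa_def using t by auto
      moreover have "infinite (nn ` ({n. t (x (nn n)) < a0} - {..k}))"
        using ia Diff_infinite_finite[of "{..k}"] finite_imageD inj_on_subset[OF inj] by blast
      ultimately have i1: "infinite {m\<in>T. t \<in> Aa a0 m}" using infinite_super by blast
      have "nn ` ({n. b0 < t (x (nn n))} - {..k}) \<subseteq> {m\<in>T. t \<in> Bb b0 m}"
        unfolding T_def Bb_def using t by auto
      moreover have "infinite (nn ` ({n. b0 < t (x (nn n))} - {..k}))"
        using ib Diff_infinite_finite[of "{..k}"] finite_imageD inj_on_subset[OF inj] by blast
      ultimately have i2: "infinite {m\<in>T. t \<in> Bb b0 m}" using infinite_super by blast
      have "osc (Aa a0) (Bb b0) t T" unfolding osc_def using i1 i2 by blast
      then have "osc (Aa (a k)) (Bb (b k)) t (LL k)" using osc_mono[OF _ TL] ak by simp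
      then show False using P1(3)[of k] ab(3) ak unfolding good_def by auto
    qed
    then show ?thesis using smono by blast
  qed
qed



lemma bl_sum: assumes "bounded_linear t" shows "t (\<Sum>i\<in>S. c i *\<^sub>R y i) = (\<Sum>i\<in>S. c i * t (y i))"
proof -
  have lin: "linear t" using bounded_linear.linear[OF assms] .
  show ?thesis
    by (induction S rule: infinite_finite_induct)
       (simp_all add: linear_0[OF lin] linear_add[OF lin] linear_scale[OF lin])
qed

lemma dualball_le: "t \<in> dualball \<Longrightarrow> t z \<le> norm z"
  unfolding dualball_def by (auto dest: spec[of _ z])

lemma finite_l1_lower:
  fixes y :: "nat \<Rightarrow> 'a::real_normed_vector"
  assumes BI: "\<forall>P Q. finite P \<longrightarrow> finite Q \<longrightarrow> P \<inter> Q = {} \<longrightarrow>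
        (\<exists>t\<in>dualball. (\<forall>i\<in>P. t (y i) < a) \<and> (\<forall>i\<in>Q. b < t (y i)))"
    and ab: "a < b"
  shows "(b - a) * (\<Sum>i<N. \<bar>c i\<bar>) \<le> 2 * norm (\<Sum>i<N. c i *\<^sub>R y i)"
proof -
  define P where "P = {i. i < N \<and> 0 \<le> c i}"
  define Q where "Q = {i. i < N \<and> c i < 0}"
  have fin: "finite P" "finite Q" "P \<inter> Q = {}" "Q \<inter> P = {}" unfolding P_def Q_def by auto
  obtain t1 where t1: "t1 \<in> dualball" "\<forall>i\<in>Q. t1 (y i) < a" "\<forall>i\<in>P. b < t1 (y i)"
    using BI[rule_format, OF fin(2) fin(1) fin(4)] by blast
  obtain t2 where t2: "t2 \<in> dualball" "\<forall>i\<in>P. t2 (y i) < a" "\<forall>i\<in>Q. b < t2 (y i)"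
    using BI[rule_format, OF fin(1) fin(2) fin(3)] by blast
  define S where "S = (\<Sum>i<N. c i *\<^sub>R y i)"
  have bl1: "bounded_linear t1" and bl2: "bounded_linear t2" using t1(1) t2(1) unfolding dualball_def by auto
  have "\<bar>c i\<bar> * (b - a) \<le> c i * (t1 (y i) - t2 (y i))" if "i < N" for i
  proof (cases "0 \<le> c i")
    case True
    then have "i \<in> P" using that unfolding P_def by auto
    then have "b - a \<le> t1 (y i) - t2 (y i)" using t1(3) t2(2) by fastforce
    then show ?thesis using True by (simp add: mult_left_mono)
  next
    case False
    then have "i \<in> Q" using that unfolding Q_def by auto
    then have "t1 (y i) - t2 (y i) \<le> a - b" using t1(2) t2(3) by fastforce
    then have "c i * (a - b) \<le> c i * (t1 (y i) - t2 (y i))" using False by (simp add: mult_left_mono_neg)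
    then show ?thesis using False by (simp add: algebra_simps)
  qed
  then have "(\<Sum>i<N. \<bar>c i\<bar> * (b - a)) \<le> (\<Sum>i<N. c i * (t1 (y i) - t2 (y i)))"
    by (intro sum_mono) auto
  also have "\<dots> = t1 S - t2 S" unfolding S_def bl_sum[OF bl1] bl_sum[OF bl2]
    by (simp add: algebra_simps sum_subtractf)
  also have "\<dots> \<le> 2 * norm S"
  proof -
    have "t1 S \<le> norm S" using dualball_le[OF t1(1)] .
    moreover have "- t2 S \<le> norm S" using t2(1) unfolding dualball_def by (auto dest: spec[of _ S])
    ultimately show ?thesis by linarith
  qed
  finally have "(\<Sum>i<N. \<bar>c i\<bar> * (b - a)) \<le> 2 * norm S" .
  moreover have "(b - a) * (\<Sum>i<N. \<bar>c i\<bar>) = (\<Sum>i<N. \<bar>c i\<bar> * (b - a))"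
    by (simp add: sum_distrib_left mult.commute)
  ultimately show ?thesis unfolding S_def by linarith
qed

lemma ell1_embed:
  fixes y :: "nat \<Rightarrow> 'a::banach"
  assumes K: "\<And>n. norm (y n) \<le> K" and ab: "a < b"
    and BI: "\<forall>P Q. finite P \<longrightarrow> finite Q \<longrightarrow> P \<inter> Q = {} \<longrightarrow>
        (\<exists>t\<in>dualball. (\<forall>i\<in>P. t (y i) < a) \<and> (\<forall>i\<in>Q. b < t (y i)))"
  shows "contains_ell1 TYPE('a)"
proof -
  define T where "T c = (\<Sum>i. c i *\<^sub>R y i)" for c :: "nat \<Rightarrow> real"
  have K0: "0 \<le> K" using K[of 0] norm_ge_zero order_trans by blast
  have sn: "summable (\<lambda>i. norm (c i *\<^sub>R y i))" if "c \<in> ell1" for c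
  proof (rule summable_comparison_test')
    show "summable (\<lambda>i. \<bar>c i\<bar> * K)" using that unfolding ell1_def by (simp add: summable_mult2)
    fix n show "norm (norm (c n *\<^sub>R y n)) \<le> \<bar>c n\<bar> * K" using K[of n] by (simp add: mult_left_mono)
  qed
  have sm: "summable (\<lambda>i. c i *\<^sub>R y i)" if "c \<in> ell1" for c using summable_norm_cancel[OF sn[OF that]] .
  have add: "T (\<lambda>n. c n + d n) = T c + T d" if "c \<in> ell1" "d \<in> ell1" for c d
    unfolding T_def using suminf_add[OF sm[OF that(1)] sm[OF that(2)]] by (simp add: scaleR_add_left)
  have scl: "T (\<lambda>n. s * c n) = s *\<^sub>R T c" if "c \<in> ell1" for c s
    unfolding T_def using suminf_scaleR_right[OF sm[OF that], of s] by simp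
  have upper: "norm (T c) \<le> K * ell1_norm c" if "c \<in> ell1" for c
  proof -
    have sa: "summable (\<lambda>i. \<bar>c i\<bar>)" using that unfolding ell1_def by simp
    have "norm (T c) \<le> (\<Sum>i. norm (c i *\<^sub>R y i))" unfolding T_def by (rule summable_norm[OF sn[OF that]])
    also have "\<dots> \<le> (\<Sum>i. \<bar>c i\<bar> * K)"
      by (rule suminf_le) (use K sn[OF that] sa in \<open>auto simp: mult_left_mono summable_mult2\<close>)
    also have "\<dots> = K * ell1_norm c" unfolding ell1_norm_def using suminf_mult2[OF sa, of K] by (simp add: mult.commute)
    finally show ?thesis .
  qed
  have lower: "(b - a) / 2 * ell1_norm c \<le> norm (T c)" if "c \<in> ell1" for c
  proof -
    have sa: "summable (\<lambda>i. \<bar>c i\<bar>)" using that unfolding ell1_def by simp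
    have l1: "(\<lambda>N. (b - a) / 2 * (\<Sum>i<N. \<bar>c i\<bar>)) \<longlonglongrightarrow> (b - a) / 2 * ell1_norm c"
      unfolding ell1_norm_def by (intro tendsto_mult tendsto_const summable_LIMSEQ sa)
    have l2: "(\<lambda>N. norm (\<Sum>i<N. c i *\<^sub>R y i)) \<longlonglongrightarrow> norm (T c)"
      unfolding T_def by (intro tendsto_norm summable_LIMSEQ sm that)
    show ?thesis
    proof (rule LIMSEQ_le[OF l1 l2])
      show "\<exists>N. \<forall>n\<ge>N. (b - a) / 2 * (\<Sum>i<n. \<bar>c i\<bar>) \<le> norm (\<Sum>i<n. c i *\<^sub>R y i)"
        using finite_l1_lower[OF BI ab] by (intro exI[of _ 0] allI impI) (simp add: field_simps)
    qed
  qed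
  have pos: "0 < (b - a) / 2" using ab by simp
  have "0 < (b - a) / 2 \<and>
        (\<forall>c\<in>ell1. \<forall>d\<in>ell1. T (\<lambda>n. c n + d n) = T c + T d) \<and>
        (\<forall>c\<in>ell1. \<forall>s::real. T (\<lambda>n. s * c n) = s *\<^sub>R T c) \<and>
        (\<forall>c\<in>ell1. (b - a) / 2 * ell1_norm c \<le> norm (T c) \<and> norm (T c) \<le> K * ell1_norm c)"
    using add scl upper lower pos by auto
  then show ?thesis unfolding contains_ell1_def by (intro exI[of _ T] exI[of _ "(b - a) / 2"] exI[of _ K])
qed

lemma weakly_cauchy_subseq:
  fixes x :: "nat \<Rightarrow> 'a::banach"
  assumes nl1: "\<not> contains_ell1 TYPE('a)" and K: "\<And>n. norm (x n) \<le> K"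
  shows "\<exists>r. strict_mono r \<and> (\<forall>f :: 'a \<Rightarrow> real. bounded_linear f \<longrightarrow> convergent (\<lambda>n. f (x (r n))))"
proof -
  have neg: "\<not> (\<exists>(r::nat \<Rightarrow> nat) a b. a < b \<and> strict_mono r \<and> (\<forall>P Q. finite P \<longrightarrow> finite Q \<longrightarrow> P \<inter> Q = {} \<longrightarrow>
        (\<exists>t\<in>dualball. (\<forall>i\<in>P. t (x (r i)) < a) \<and> (\<forall>i\<in>Q. b < t (x (r i))))))"
  proof
    assume "\<exists>(r::nat \<Rightarrow> nat) a b. a < b \<and> strict_mono r \<and> (\<forall>P Q. finite P \<longrightarrow> finite Q \<longrightarrow> P \<inter> Q = {} \<longrightarrow>
        (\<exists>t\<in>dualball. (\<forall>i\<in>P. t (x (r i)) < a) \<and> (\<forall>i\<in>Q. b < t (x (r i)))))"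
    then show False
    proof (elim exE conjE)
      fix r :: "nat \<Rightarrow> nat" and a b
      assume r1: "a < b" and r2: "strict_mono r" and r3: "\<forall>P Q. finite P \<longrightarrow> finite Q \<longrightarrow> P \<inter> Q = {} \<longrightarrow>
        (\<exists>t\<in>dualball. (\<forall>i\<in>P. t (x (r i)) < a) \<and> (\<forall>i\<in>Q. b < t (x (r i))))"
    have "contains_ell1 TYPE('a)"
    proof (rule ell1_embed[of "\<lambda>i. x (r i)" K a b])
      show "norm (x (r n)) \<le> K" for n by (rule K)
      show "a < b" by (rule r1)
      show "\<forall>P Q. finite P \<longrightarrow> finite Q \<longrightarrow> P \<inter> Q = {} \<longrightarrow>
        (\<exists>t\<in>dualball. (\<forall>i\<in>P. t (x (r i)) < a) \<and> (\<forall>i\<in>Q. b < t (x (r i))))" by (rule r3)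
    qed
    then show False using nl1 by simp
    qed
  qed
  have "\<exists>r. strict_mono r \<and> (\<forall>t\<in>dualball. convergent (\<lambda>n. t (x (r n))))"
    using rosenthal_dich[OF K]
  proof (rule disjE)
    assume "\<exists>r. strict_mono r \<and> (\<forall>t\<in>dualball. convergent (\<lambda>n. t (x (r n))))"
    then show ?thesis .
  next
    assume "\<exists>(r::nat \<Rightarrow> nat) a b. a < b \<and> strict_mono r \<and> (\<forall>P Q. finite P \<longrightarrow> finite Q \<longrightarrow> P \<inter> Q = {} \<longrightarrow>
        (\<exists>t\<in>dualball. (\<forall>i\<in>P. t (x (r i)) < a) \<and> (\<forall>i\<in>Q. b < t (x (r i)))))"
    then show ?thesis using neg by contradiction
  qed
  then obtain r where r: "strict_mono r" "\<forall>t\<in>dualball. convergent (\<lambda>n. t (x (r n)))"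
    by blast
  have "convergent (\<lambda>n. f (x (r n)))" if f: "bounded_linear f" for f :: "'a \<Rightarrow> real"
  proof -
    obtain Kf where Kf: "Kf > 0" "\<forall>y. norm (f y) \<le> norm y * Kf" using bounded_linear.pos_bounded[OF f] by blast
    define t where "t y = f y / Kf" for y
    have "bounded_linear t" unfolding t_def
      using bounded_linear_compose[OF bounded_linear_divide[of Kf] f] by (simp add: o_def)
    moreover have "\<bar>t y\<bar> \<le> norm y" for y
      using Kf(2)[rule_format, of y] Kf(1) unfolding t_def by (simp add: divide_le_eq abs_divide)
    ultimately have "t \<in> dualball" unfolding dualball_def by blast
    then have "convergent (\<lambda>n. t (x (r n)))" using r(2) by blast
    then have "convergent (\<lambda>n. Kf * t (x (r n)))" using convergent_mult_const_iff[of Kf] Kf(1) by simp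
    moreover have "(\<lambda>n. Kf * t (x (r n))) = (\<lambda>n. f (x (r n)))" unfolding t_def using Kf(1) by auto
    ultimately show ?thesis by simp
  qed
  then show ?thesis using r(1) by (intro exI[of _ r]) simp
qed



lemma powr_34_lt1: "0 < (\<theta>::real) \<Longrightarrow> (3/4::real) powr \<theta> < 1"
  using powr_less_mono2[of \<theta> "3/4" 1] by simp

lemma dyadic_bound:
  fixes w :: "nat \<Rightarrow> 'a::real_normed_vector"
  assumes th: "0 < \<theta>" "\<theta> < 1" and c: "0 < c"
    and blk: "\<And>F. finite F \<Longrightarrow> F \<noteq> {} \<Longrightarrow> card F \<le> Min F \<Longrightarrow> norm (\<Sum>j\<in>F. w j) \<le> c * real (card F) powr \<theta>"
  defines "D \<equiv> max (norm (w 0)) (c / (1 - (3/4) powr \<theta>))"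
  shows "norm (\<Sum>j<J. w j) \<le> D * real J powr \<theta>"
proof (induction J rule: less_induct)
  case (less J)
  have q: "(3/4::real) powr \<theta> < 1" using powr_34_lt1[OF th(1)] .
  have D1: "c / (1 - (3/4) powr \<theta>) \<le> D" unfolding D_def by simp
  have D0: "0 \<le> D" using D1 c q by (smt (verit) divide_pos_pos)
  have cD: "c \<le> D * (1 - (3/4) powr \<theta>)" using D1 q by (simp add: pos_divide_le_eq)
  show ?case
  proof (cases "J \<le> 1")
    case True
    then consider "J = 0" | "J = 1" by linarith
    then show ?thesis
    proof cases
      case 1 then show ?thesis by simp
    next
      case 2 then show ?thesis unfolding D_def by simp
    qed
  next
    case False
    define m where "m = (J + 1) div 2"
    have m: "1 \<le> m" "m < J" "J - m \<le> m" "real m \<le> 3/4 * real J" using False unfolding m_def by linarith+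
    have split: "{..<J} = {..<m} \<union> {m..<J}" using m by auto
    have "(\<Sum>j<J. w j) = (\<Sum>j<m. w j) + (\<Sum>j\<in>{m..<J}. w j)"
      unfolding split by (rule sum.union_disjoint) auto
    then have "norm (\<Sum>j<J. w j) \<le> norm (\<Sum>j<m. w j) + norm (\<Sum>j\<in>{m..<J}. w j)"
      by (simp add: norm_triangle_ineq)
    moreover have "norm (\<Sum>j<m. w j) \<le> D * real m powr \<theta>" using less m(2) by blast
    moreover have "norm (\<Sum>j\<in>{m..<J}. w j) \<le> c * real (J - m) powr \<theta>"
    proof -
      have "Min {m..<J} = m" using m(2) by (intro Min_eqI) auto
      then have "norm (\<Sum>j\<in>{m..<J}. w j) \<le> c * real (card {m..<J}) powr \<theta>"
        using m by (intro blk) auto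
      then show ?thesis by simp
    qed
    moreover have "real m powr \<theta> \<le> (3/4) powr \<theta> * real J powr \<theta>"
    proof -
      have "real m powr \<theta> \<le> (3/4 * real J) powr \<theta>" by (rule powr_mono2) (use m th in auto)
      moreover have "(3/4 * real J) powr \<theta> = (3/4) powr \<theta> * real J powr \<theta>" by (rule powr_mult)
      ultimately show ?thesis by simp
    qed
    moreover have "real (J - m) powr \<theta> \<le> real J powr \<theta>"
      by (rule powr_mono2) (use th in auto)
    ultimately have "norm (\<Sum>j<J. w j) \<le> D * ((3/4) powr \<theta> * real J powr \<theta>) + c * real J powr \<theta>"
      using D0 c by (smt (verit) mult_left_mono)
    also have "\<dots> \<le> D * real J powr \<theta>"
    proof -
      have "c * real J powr \<theta> \<le> D * (1 - (3/4) powr \<theta>) * real J powr \<theta>"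
        using cD by (simp add: mult_right_mono)
      then show ?thesis by (simp add: algebra_simps)
    qed
    finally show ?thesis .
  qed
qed

lemma block_bound:
  fixes u :: "nat \<Rightarrow> 'a::real_normed_vector"
  assumes p: "1 < p" and pbs: "p_Banach_Saks p TYPE('a)" and wn: "weakly_null u"
    and K: "\<And>n. norm (u n) \<le> K"
  shows "\<exists>s D \<theta>. strict_mono s \<and> 0 \<le> D \<and> 0 \<le> \<theta> \<and> \<theta> < 1 \<and> (\<forall>J. norm (\<Sum>j<J. u (s j)) \<le> D * real J powr \<theta>)"
proof (cases "\<exists>\<delta>>0. \<exists>N. \<forall>n\<ge>N. \<delta> \<le> norm (u n)")
  case True
  then obtain \<delta> N where \<delta>: "\<delta> > 0" "\<forall>n\<ge>N. \<delta> \<le> norm (u n)" by blast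
  define v where "v n = u (n + N)" for n
  have "0 < \<delta> \<and> (\<forall>n. \<delta> \<le> norm (v n) \<and> norm (v n) \<le> K)" unfolding v_def using \<delta> K by auto
  then have sn: "semi_normalized v" unfolding semi_normalized_def by blast
  have wnv: "weakly_null v" unfolding weakly_null_def
  proof (intro allI impI)
    fix f :: "'a \<Rightarrow> real" assume "bounded_linear f"
    then have "(\<lambda>n. f (u n)) \<longlonglongrightarrow> 0" using wn unfolding weakly_null_def by blast
    then show "(\<lambda>n. f (v n)) \<longlonglongrightarrow> 0" unfolding v_def by (rule LIMSEQ_ignore_initial_segment)
  qed
  have "\<exists>r c. strict_mono r \<and> c > 0 \<and>
           (\<forall>F. finite F \<and> F \<noteq> {} \<and> card F \<le> Min F \<longrightarrow>
              norm (\<Sum>j\<in>F. v (r j)) \<le> c * real (card F) powr (1 / p))"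
    using pbs sn wnv unfolding p_Banach_Saks_def by blast
  then obtain r c where r: "strict_mono r" "c > 0"
    "\<forall>F. finite F \<and> F \<noteq> {} \<and> card F \<le> Min F \<longrightarrow> norm (\<Sum>j\<in>F. v (r j)) \<le> c * real (card F) powr (1 / p)"
    by blast
  define \<theta> where "\<theta> = 1 / p"
  have th: "0 < \<theta>" "\<theta> < 1" unfolding \<theta>_def using p by auto
  define D where "D = max (norm (v (r 0))) (c / (1 - (3/4) powr \<theta>))"
  have bnd: "norm (\<Sum>j<J. v (r j)) \<le> D * real J powr \<theta>" for J
    unfolding D_def
  proof (rule dyadic_bound[OF th r(2)])
    fix F :: "nat set" assume "finite F" "F \<noteq> {}" "card F \<le> Min F"
    then show "norm (\<Sum>j\<in>F. v (r j)) \<le> c * real (card F) powr \<theta>" using r(3) unfolding \<theta>_def by blast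
  qed
  have D0: "0 \<le> D" unfolding D_def by (simp add: le_max_iff_disj)
  define s where "s j = r j + N" for j
  have "strict_mono s" using r(1) unfolding s_def strict_mono_def by simp
  moreover have "\<forall>J. norm (\<Sum>j<J. u (s j)) \<le> D * real J powr \<theta>" using bnd unfolding s_def v_def by simp
  ultimately show ?thesis using D0 th by (intro exI[of _ s] exI[of _ D] exI[of _ \<theta>]) simp
next
  case False
  have small: "\<forall>\<delta>>0. \<forall>N. \<exists>n\<ge>N. norm (u n) < \<delta>"
  proof (intro allI impI)
    fix \<delta> :: real and N :: nat assume d: "\<delta> > 0"
    show "\<exists>n\<ge>N. norm (u n) < \<delta>"
    proof (rule ccontr)
      assume "\<not> (\<exists>n\<ge>N. norm (u n) < \<delta>)"
      then have "\<forall>n\<ge>N. \<delta> \<le> norm (u n)" using not_less by blast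
      then show False using False d by blast
    qed
  qed
  define P where "P = (\<lambda>(j::nat) (n::nat). norm (u n) < (1/2)^j)"
  define Q where "Q = (\<lambda>(j::nat) (n::nat) (n'::nat). n < n')"
  have "\<exists>f. \<forall>j. P j (f j) \<and> Q j (f j) (f (Suc j))"
  proof (rule dependent_nat_choice)
    obtain n where "norm (u n) < 1" using small[rule_format, of 1 0] by auto
    then show "\<exists>n. P 0 n" unfolding P_def by auto
  next
    fix n j assume "P j n"
    have "(0::real) < (1/2)^Suc j" by simp
    then obtain n' where "n' \<ge> Suc n" "norm (u n') < (1/2)^Suc j" using small by blast
    then show "\<exists>n'. P (Suc j) n' \<and> Q j n n'" unfolding P_def Q_def by (intro exI[of _ n']) simp
  qed
  then obtain s where s: "\<And>j. norm (u (s j)) < (1/2)^j" "\<And>j. s j < s (Suc j)"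
    unfolding P_def Q_def by blast
  have sm: "strict_mono s" unfolding strict_mono_Suc_iff using s(2) by blast
  have "norm (\<Sum>j<J. u (s j)) \<le> 2 * real J powr 0" for J
  proof (cases "J = 0")
    case True then show ?thesis by simp
  next
    case False
    have "norm (\<Sum>j<J. u (s j)) \<le> (\<Sum>j<J. (1/2::real)^j)"
      by (rule sum_norm_le) (use s(1) in \<open>auto intro: less_imp_le\<close>)
    also have "\<dots> = (1 - (1/2)^J) / (1 - 1/2)" using sum_gp_strict[of "1/2::real" J] by simp
    also have "\<dots> \<le> 2" by simp
    finally show ?thesis using False by simp
  qed
  then show ?thesis using sm by (intro exI[of _ s] exI[of _ 2] exI[of _ 0]) simp
qed

lemma avg_zero:
  fixes g :: "nat \<Rightarrow> 'a::real_normed_vector"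
  assumes bnd: "\<And>k. norm (g k) \<le> D * real (Suc k) powr \<theta> + E" and th: "\<theta> < 1"
  shows "(\<lambda>k. (1 / real (Suc k)) *\<^sub>R g k) \<longlonglongrightarrow> 0"
proof (rule Lim_null_comparison)
  have lim: "filterlim (\<lambda>k. real (Suc k)) at_top sequentially"
    using filterlim_real_sequentially filterlim_sequentially_Suc[of real at_top] by simp
  have "(\<lambda>k. D * real (Suc k) powr (\<theta> - 1) + E * real (Suc k) powr (-1)) \<longlonglongrightarrow> D * 0 + E * 0"
    by (intro tendsto_add tendsto_mult tendsto_const tendsto_neg_powr lim) (use th in auto)
  then show "(\<lambda>k. D * real (Suc k) powr (\<theta> - 1) + E * real (Suc k) powr (-1)) \<longlonglongrightarrow> 0" by simp
  show "\<forall>\<^sub>F k in sequentially. norm ((1 / real (Suc k)) *\<^sub>R g k) \<le> D * real (Suc k) powr (\<theta> - 1) + E * real (Suc k) powr (-1)"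
  proof (rule always_eventually, rule allI)
    fix k
    define n where "n = real (Suc k)"
    have n: "0 < n" unfolding n_def by simp
    have "norm ((1 / n) *\<^sub>R g k) = norm (g k) / n" using n by simp
    also have "\<dots> \<le> (D * n powr \<theta> + E) / n" using bnd[of k] n unfolding n_def by (simp add: divide_right_mono)
    also have "\<dots> = D * n powr (\<theta> - 1) + E * n powr (-1)"
      using n by (simp add: powr_diff powr_minus divide_inverse algebra_simps)
    finally show "norm ((1 / real (Suc k)) *\<^sub>R g k) \<le> D * real (Suc k) powr (\<theta> - 1) + E * real (Suc k) powr (-1)"
      unfolding n_def .
  qed
qed



lemma bl_diff: "bounded_linear f \<Longrightarrow> f (a - b) = f a - f b"
  using linear_diff[OF bounded_linear.linear] by blast

lemma pair_sum:
  fixes s :: "nat \<Rightarrow> nat" and z :: "nat \<Rightarrow> 'a::real_normed_vector"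
  defines "\<rho> \<equiv> \<lambda>m. 2 * s (m div 2) + m mod 2"
  shows "(\<Sum>m<2*J. ((-1::real)^m) *\<^sub>R z (\<rho> m)) = (\<Sum>j<J. z (2 * s j) - z (2 * s j + 1))"
proof (induction J)
  case 0 then show ?case by simp
next
  case (Suc J)
  have e: "2 * Suc J = Suc (Suc (2 * J))" by simp
  have "\<rho> (2 * J) = 2 * s J" "\<rho> (Suc (2 * J)) = 2 * s J + 1" unfolding \<rho>_def by simp_all
  then show ?case unfolding e using Suc by (simp add: algebra_simps)
qed

lemma rho_mono:
  assumes "strict_mono (s :: nat \<Rightarrow> nat)"
  shows "strict_mono (\<lambda>m. 2 * s (m div 2) + m mod 2)"
  unfolding strict_mono_Suc_iff
proof
  fix m
  show "2 * s (m div 2) + m mod 2 < 2 * s (Suc m div 2) + Suc m mod 2"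
  proof (cases "even m")
    case True
    then have "Suc m div 2 = m div 2" "m mod 2 = 0" "Suc m mod 2 = 1" by (auto elim: evenE)
    then show ?thesis by simp
  next
    case False
    then obtain j where j: "m = 2 * j + 1" by (auto elim: oddE)
    then have "Suc m div 2 = Suc j" "m div 2 = j" "m mod 2 = 1" "Suc m mod 2 = 0" by simp_all
    moreover have "s j < s (Suc j)" using assms unfolding strict_mono_def by simp
    ultimately show ?thesis by simp
  qed
qed

lemma alt_BS:
  fixes p :: real
  assumes p: "1 < p" and pbs: "p_Banach_Saks p TYPE('a::banach)" and nl1: "\<not> contains_ell1 TYPE('a)"
  shows "alternating_Banach_Saks TYPE('a)"
  unfolding alternating_Banach_Saks_def
proof (intro allI impI)
  fix x :: "nat \<Rightarrow> 'a" assume "bounded (range x)"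
  then obtain K where K: "\<And>n. norm (x n) \<le> K" unfolding bounded_iff by auto
  have K0: "0 \<le> K" using K[of 0] norm_ge_zero order_trans by blast
  obtain r where r: "strict_mono r" "\<forall>f::'a\<Rightarrow>real. bounded_linear f \<longrightarrow> convergent (\<lambda>n. f (x (r n)))"
    using weakly_cauchy_subseq[of x K, OF nl1 K] by blast
  define z where "z n = x (r n)" for n
  define y where "y j = z (2*j) - z (2*j+1)" for j
  have wny: "weakly_null y" unfolding weakly_null_def
  proof (intro allI impI)
    fix f :: "'a \<Rightarrow> real" assume f: "bounded_linear f"
    then have "convergent (\<lambda>n. f (z n))" using r(2) unfolding z_def by blast
    then obtain L where L: "(\<lambda>n. f (z n)) \<longlonglongrightarrow> L" unfolding convergent_def by blast
    have s1: "strict_mono (\<lambda>j::nat. 2*j)" unfolding strict_mono_def by simp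
    have s2: "strict_mono (\<lambda>j::nat. 2*j+1)" unfolding strict_mono_def by simp
    have "(\<lambda>j. f (z (2*j))) \<longlonglongrightarrow> L" using LIMSEQ_subseq_LIMSEQ[OF L s1] by (simp add: o_def)
    moreover have "(\<lambda>j. f (z (2*j+1))) \<longlonglongrightarrow> L" using LIMSEQ_subseq_LIMSEQ[OF L s2] by (simp add: o_def)
    ultimately have "(\<lambda>j. f (z (2*j)) - f (z (2*j+1))) \<longlonglongrightarrow> L - L" by (rule tendsto_diff)
    then show "(\<lambda>j. f (y j)) \<longlonglongrightarrow> 0" unfolding y_def bl_diff[OF f] by simp
  qed
  have Ky: "norm (y j) \<le> 2 * K" for j
  proof -
    have "norm (y j) \<le> norm (z (2*j)) + norm (z (2*j+1))" unfolding y_def by (rule norm_triangle_ineq4)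
    then show ?thesis using K unfolding z_def by (smt (verit))
  qed
  obtain s D \<theta> where sD: "strict_mono s" "0 \<le> D" "0 \<le> \<theta>" "\<theta> < 1"
    "\<forall>J. norm (\<Sum>j<J. y (s j)) \<le> D * real J powr \<theta>"
    using block_bound[of p y "2 * K", OF p pbs wny Ky] by blast
  define \<rho> where "\<rho> m = 2 * s (m div 2) + m mod 2" for m
  define \<epsilon> where "\<epsilon> m = (-1::real)^m" for m
  have ps: "(\<Sum>m<2*J. \<epsilon> m *\<^sub>R z (\<rho> m)) = (\<Sum>j<J. y (s j))" for J
    unfolding \<epsilon>_def \<rho>_def y_def using pair_sum[where s=s and z=z and J=J] by simp
  have mono: "real J powr \<theta> \<le> real (Suc k) powr \<theta>" if "J \<le> Suc k" for J k
    by (rule powr_mono2) (use sD(3) that in auto)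
  have bnd: "norm (\<Sum>m\<le>k. \<epsilon> m *\<^sub>R x ((r \<circ> \<rho>) m)) \<le> D * real (Suc k) powr \<theta> + K" for k
  proof -
    have eq: "(\<Sum>m\<le>k. \<epsilon> m *\<^sub>R x ((r \<circ> \<rho>) m)) = (\<Sum>m<Suc k. \<epsilon> m *\<^sub>R z (\<rho> m))"
      unfolding z_def lessThan_Suc_atMost by simp
    show ?thesis
    proof (cases "even (Suc k)")
      case True
      then obtain J where J: "Suc k = 2 * J" by (rule evenE)
      have "norm (\<Sum>m<Suc k. \<epsilon> m *\<^sub>R z (\<rho> m)) \<le> D * real J powr \<theta>" unfolding J ps using sD(5) by blast
      also have "\<dots> \<le> D * real (Suc k) powr \<theta>" using mono[of J k] J sD(2) by (simp add: mult_left_mono)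
      finally show ?thesis unfolding eq using K0 by simp
    next
      case False
      then obtain J where J0: "Suc k = 2 * J + 1" by (rule oddE)
      then have J: "Suc k = Suc (2 * J)" by simp
      have "(\<Sum>m<Suc k. \<epsilon> m *\<^sub>R z (\<rho> m)) = (\<Sum>j<J. y (s j)) + \<epsilon> (2*J) *\<^sub>R z (\<rho> (2*J))"
        unfolding J sum.lessThan_Suc ps ..
      then have "norm (\<Sum>m<Suc k. \<epsilon> m *\<^sub>R z (\<rho> m)) \<le> norm (\<Sum>j<J. y (s j)) + norm (\<epsilon> (2*J) *\<^sub>R z (\<rho> (2*J)))"
        by (metis norm_triangle_ineq)
      moreover have "norm (\<epsilon> (2*J) *\<^sub>R z (\<rho> (2*J))) \<le> K" unfolding \<epsilon>_def z_def using K by simp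
      moreover have "norm (\<Sum>j<J. y (s j)) \<le> D * real (Suc k) powr \<theta>"
      proof -
        have "J \<le> Suc k" using J by simp
        then have "D * real J powr \<theta> \<le> D * real (Suc k) powr \<theta>" using mono[of J k] sD(2) by (simp add: mult_left_mono)
        then show ?thesis using sD(5)[rule_format, of J] by linarith
      qed
      ultimately show ?thesis unfolding eq by linarith
    qed
  qed
  have "(\<lambda>k. (1 / real (Suc k)) *\<^sub>R (\<Sum>j\<le>k. \<epsilon> j *\<^sub>R x ((r \<circ> \<rho>) j))) \<longlonglongrightarrow> 0"
    by (rule avg_zero[OF bnd sD(4)])
  then have conv: "convergent (\<lambda>k. (1 / real (Suc k)) *\<^sub>R (\<Sum>j\<le>k. \<epsilon> j *\<^sub>R x ((r \<circ> \<rho>) j)))"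
    unfolding convergent_def by blast
  have sm: "strict_mono (r \<circ> \<rho>)" using strict_mono_o[OF r(1) rho_mono[OF sD(1)]] unfolding \<rho>_def .
  have eps: "\<forall>j. \<epsilon> j \<in> {-1, 1::real}" unfolding \<epsilon>_def by (auto simp: minus_one_power_iff)
  show "\<exists>r \<epsilon>. strict_mono r \<and> (\<forall>j. \<epsilon> j \<in> {-1, 1::real}) \<and>
           convergent (\<lambda>k. (1 / real (Suc k)) *\<^sub>R (\<Sum>j\<le>k. \<epsilon> j *\<^sub>R x (r j)))"
    using sm eps conv by (intro exI[of _ "r \<circ> \<rho>"] exI[of _ \<epsilon>]) simp
qed

lemma refl_BS:
  fixes p :: real
  assumes p: "1 < p" and pbs: "p_Banach_Saks p TYPE('a::banach)" and nl1: "\<not> contains_ell1 TYPE('a)"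
    and refl: "reflexive_space TYPE('a)"
  shows "Banach_Saks TYPE('a)"
  unfolding Banach_Saks_def
proof (intro allI impI)
  fix x :: "nat \<Rightarrow> 'a" assume "bounded (range x)"
  then obtain K where K: "\<And>n. norm (x n) \<le> K" unfolding bounded_iff by auto
  have K0: "0 \<le> K" using K[of 0] norm_ge_zero order_trans by blast
  obtain r where r: "strict_mono r" "\<forall>f::'a\<Rightarrow>real. bounded_linear f \<longrightarrow> convergent (\<lambda>n. f (x (r n)))"
    using weakly_cauchy_subseq[of x K, OF nl1 K] by blast
  define z where "z n = x (r n)" for n
  have cz: "convergent (\<lambda>n. blinfun_apply f (z n))" for f :: "'a \<Rightarrow>\<^sub>L real"
    using r(2) blinfun.bounded_linear_right[of f] unfolding z_def by blast
  define \<phi> where "\<phi> f = lim (\<lambda>n. blinfun_apply f (z n))" for f :: "'a \<Rightarrow>\<^sub>L real"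
  have tz: "(\<lambda>n. blinfun_apply f (z n)) \<longlonglongrightarrow> \<phi> f" for f
    unfolding \<phi>_def using cz[of f] by (simp add: convergent_LIMSEQ_iff)
  have bl: "bounded_linear \<phi>"
  proof (rule bounded_linear_intro[where K = K])
    fix f g :: "'a \<Rightarrow>\<^sub>L real"
    have "(\<lambda>n. blinfun_apply (f + g) (z n)) \<longlonglongrightarrow> \<phi> f + \<phi> g"
      using tendsto_add[OF tz[of f] tz[of g]] by (simp add: plus_blinfun.rep_eq)
    then show "\<phi> (f + g) = \<phi> f + \<phi> g" using tz[of "f + g"] LIMSEQ_unique by blast
  next
    fix c :: real and f :: "'a \<Rightarrow>\<^sub>L real"
    have "(\<lambda>n. blinfun_apply (c *\<^sub>R f) (z n)) \<longlonglongrightarrow> c *\<^sub>R \<phi> f"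
      using tendsto_scaleR[OF tendsto_const tz[of f], of c] by (simp add: scaleR_blinfun.rep_eq)
    then show "\<phi> (c *\<^sub>R f) = c *\<^sub>R \<phi> f" using tz[of "c *\<^sub>R f"] LIMSEQ_unique by blast
  next
    fix f :: "'a \<Rightarrow>\<^sub>L real"
    have "(\<lambda>n. norm (blinfun_apply f (z n))) \<longlonglongrightarrow> norm (\<phi> f)" using tendsto_norm[OF tz[of f]] .
    moreover have "norm (blinfun_apply f (z n)) \<le> norm f * K" for n
    proof -
      have "norm (blinfun_apply f (z n)) \<le> norm f * norm (z n)" by (rule norm_blinfun)
      also have "\<dots> \<le> norm f * K" using K[of "r n"] unfolding z_def by (simp add: mult_left_mono)
      finally show ?thesis .
    qed
    ultimately show "norm (\<phi> f) \<le> norm f * K" using LIMSEQ_le_const2 by blast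
  qed
  obtain x0 where x0: "\<forall>f. blinfun_apply (Blinfun \<phi>) f = blinfun_apply f x0"
    using refl unfolding reflexive_space_def by blast
  have phix0: "\<phi> f = blinfun_apply f x0" for f using x0 bounded_linear_Blinfun_apply[OF bl] by simp
  define u where "u n = z n - x0" for n
  have wnu: "weakly_null u" unfolding weakly_null_def
  proof (intro allI impI)
    fix g :: "'a \<Rightarrow> real" assume g: "bounded_linear g"
    have "(\<lambda>n. blinfun_apply (Blinfun g) (z n)) \<longlonglongrightarrow> \<phi> (Blinfun g)" by (rule tz)
    then have "(\<lambda>n. g (z n)) \<longlonglongrightarrow> g x0" using phix0[of "Blinfun g"] bounded_linear_Blinfun_apply[OF g] by simp
    then have "(\<lambda>n. g (z n) - g x0) \<longlonglongrightarrow> g x0 - g x0" by (intro tendsto_diff tendsto_const)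
    then show "(\<lambda>n. g (u n)) \<longlonglongrightarrow> 0" unfolding u_def bl_diff[OF g] by simp
  qed
  have Ku: "norm (u n) \<le> K + norm x0" for n
  proof -
    have "norm (u n) \<le> norm (z n) + norm x0" unfolding u_def by (rule norm_triangle_ineq4)
    then show ?thesis using K[of "r n"] unfolding z_def by linarith
  qed
  obtain s D \<theta> where sD: "strict_mono s" "0 \<le> D" "0 \<le> \<theta>" "\<theta> < 1"
    "\<forall>J. norm (\<Sum>j<J. u (s j)) \<le> D * real J powr \<theta>"
    using block_bound[of p u "K + norm x0", OF p pbs wnu Ku] by blast
  have bnd: "norm (\<Sum>j\<le>k. u (s j)) \<le> D * real (Suc k) powr \<theta> + 0" for k
    using sD(5)[rule_format, of "Suc k"] unfolding lessThan_Suc_atMost by simp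
  have lim0: "(\<lambda>k. (1 / real (Suc k)) *\<^sub>R (\<Sum>j\<le>k. u (s j))) \<longlonglongrightarrow> 0"
    by (rule avg_zero[OF bnd sD(4)])
  have eq: "(1 / real (Suc k)) *\<^sub>R (\<Sum>j\<le>k. x ((r \<circ> s) j)) = x0 + (1 / real (Suc k)) *\<^sub>R (\<Sum>j\<le>k. u (s j))" for k
  proof -
    have "(\<Sum>j\<le>k. x ((r \<circ> s) j)) = (\<Sum>j\<le>k. u (s j)) + real (Suc k) *\<^sub>R x0"
      unfolding u_def z_def by (simp add: sum_subtractf sum_constant_scaleR)
    then show ?thesis by (simp add: scaleR_add_right)
  qed
  have "(\<lambda>k. x0 + (1 / real (Suc k)) *\<^sub>R (\<Sum>j\<le>k. u (s j))) \<longlonglongrightarrow> x0 + 0"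
    by (intro tendsto_add tendsto_const lim0)
  then have "(\<lambda>k. (1 / real (Suc k)) *\<^sub>R (\<Sum>j\<le>k. x ((r \<circ> s) j))) \<longlonglongrightarrow> x0" unfolding eq by simp
  then have conv: "convergent (\<lambda>k. (1 / real (Suc k)) *\<^sub>R (\<Sum>j\<le>k. x ((r \<circ> s) j)))"
    unfolding convergent_def by blast
  have sm: "strict_mono (r \<circ> s)" using strict_mono_o[OF r(1) sD(1)] .
  show "\<exists>r. strict_mono r \<and> convergent (\<lambda>k. (1 / real (Suc k)) *\<^sub>R (\<Sum>j\<le>k. x (r j)))"
    using sm conv by (intro exI[of _ "r \<circ> s"]) simp
qed

theorem proposition3p1:
  fixes p :: real
  assumes "1 < p"
    and "p_Banach_Saks p TYPE('a::banach)"
    and "\<not> contains_ell1 TYPE('a)"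
  shows "alternating_Banach_Saks TYPE('a)
    \<and> (reflexive_space TYPE('a) \<longrightarrow> Banach_Saks TYPE('a))"
  using alt_BS[OF assms] refl_BS[OF assms] by blast

end
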